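(* Let $E$ be a finite nonempty set, $f:2^E\to\mathbb{N}$ an integral polymatroid rank function, $d\in\mathbb{N}$, and let $C_e:\mathbb{N}\times\mathbb{N}\to\mathbb{R}_+$, $e\in E$, be regular functions. Then for every $\vec t\in\mathbb{N}^E$, every optimal solution $\vec x^*(\vec t,d)$ of $P(\vec t,d)$ and every $\vec t'\in\mathbb{N}^E$ with $\|\vec t-\vec t'\|=1$, there is an optimal solution $\vec x^*(\vec t',d)$ of $P(\vec t',d)$ with $\|\vec x^*(\vec t,d)-\vec x^*(\vec t',d)\|\le 2$.
   Context: $\mathbb{N}=\{0,1,2,\dots\}$. A set function $f:2^E\to\mathbb{N}$ is an integral polymatroid rank function if $f(\emptyset)=0$, $f$ is monotone ($f(U)\le f(V)$ for $U\subseteq V$) and submodular. For $\vec x\in\mathbb{N}^E$, $x(U)=\sum_{e\in U}x_e$; $\mathbb{B}_f(d)=\{\vec x\in\mathbb{N}^E: x(U)\le f(U)\ \forall U\subseteq E,\ x(E)=d\}$. $P(\vec t,d)$: minimize $\sum_{e\in E}C_e(x_e;t_e)$ subject to $\vec x\in\mathbb{B}_f(d)$. $\|\cdot\|$ is the $L_1$-norm. For $C:\mathbb{N}\times\mathbb{N}\to\mathbb{R}$, $C^-(x;t)=C(x;t)-C(x-1;t)$ for $x\ge1$; $C$ is regular if $C^-(x;t)\le C^-(x;t+1)$ and $C^-(x;t+1)\le C^-(x+1;t)$ for all $x\ge1$, $t\in\mathbb{N}$. *)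

theory Defs
  imports Complex_Main
begin

definition polymatroid_rank :: "'a set \<Rightarrow> ('a set \<Rightarrow> nat) \<Rightarrow> bool" where
  "polymatroid_rank E f \<longleftrightarrow>
     f {} = 0 \<and>
     (\<forall>U V. U \<subseteq> V \<and> V \<subseteq> E \<longrightarrow> f U \<le> f V) \<and>
     (\<forall>U V. U \<subseteq> E \<and> V \<subseteq> E \<longrightarrow> f (U \<union> V) + f (U \<inter> V) \<le> f U + f V)"

text \<open>Vectors in N^E are represented as functions vanishing outside E.\<close>
definition natvecs :: "'a set \<Rightarrow> ('a \<Rightarrow> nat) set" where
  "natvecs E = {x. \<forall>e. e \<notin> E \<longrightarrow> x e = 0}"

definition base_set :: "'a set \<Rightarrow> ('a set \<Rightarrow> nat) \<Rightarrow> nat \<Rightarrow> ('a \<Rightarrow> nat) set" where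
  "base_set E f d = {x \<in> natvecs E. (\<forall>U. U \<subseteq> E \<longrightarrow> (\<Sum>e\<in>U. x e) \<le> f U) \<and> (\<Sum>e\<in>E. x e) = d}"

definition total_cost :: "'a set \<Rightarrow> ('a \<Rightarrow> nat \<Rightarrow> nat \<Rightarrow> real) \<Rightarrow> ('a \<Rightarrow> nat) \<Rightarrow> ('a \<Rightarrow> nat) \<Rightarrow> real" where
  "total_cost E C t x = (\<Sum>e\<in>E. C e (x e) (t e))"

definition optimal_sol :: "'a set \<Rightarrow> ('a set \<Rightarrow> nat) \<Rightarrow> ('a \<Rightarrow> nat \<Rightarrow> nat \<Rightarrow> real) \<Rightarrow> ('a \<Rightarrow> nat) \<Rightarrow> nat \<Rightarrow> ('a \<Rightarrow> nat) \<Rightarrow> bool" where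
  "optimal_sol E f C t d x \<longleftrightarrow> x \<in> base_set E f d \<and>
     (\<forall>y \<in> base_set E f d. total_cost E C t x \<le> total_cost E C t y)"

text \<open>Marginal cost C^-(x;t) = C(x;t) - C(x-1;t), used for x \<ge> 1.\<close>
definition marg :: "(nat \<Rightarrow> nat \<Rightarrow> real) \<Rightarrow> nat \<Rightarrow> nat \<Rightarrow> real" where
  "marg C x t = C x t - C (x - 1) t"

definition regular :: "(nat \<Rightarrow> nat \<Rightarrow> real) \<Rightarrow> bool" where
  "regular C \<longleftrightarrow> (\<forall>x t. x \<ge> 1 \<longrightarrow> marg C x t \<le> marg C x (t + 1) \<and> marg C x (t + 1) \<le> marg C (x + 1) t)"

definition l1dist :: "'a set \<Rightarrow> ('a \<Rightarrow> nat) \<Rightarrow> ('a \<Rightarrow> nat) \<Rightarrow> nat" where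
  "l1dist E x y = (\<Sum>e\<in>E. nat \<bar>int (x e) - int (y e)\<bar>)"

end

theory Submission
  imports Defs
begin

lemma sum_upd:
  fixes F :: "'a \<Rightarrow> 'b \<Rightarrow> 'c::comm_monoid_add"
  assumes "finite U"
  shows "(\<Sum>h\<in>U. F h ((x(k:=v)) h)) + (if k \<in> U then F k (x k) else 0)
       = (\<Sum>h\<in>U. F h (x h)) + (if k \<in> U then F k v else 0)"
proof (cases "k \<in> U")
  case True
  have "(\<Sum>h\<in>U. F h ((x(k:=v)) h)) = F k v + (\<Sum>h\<in>U-{k}. F h ((x(k:=v)) h))"
    using assms True by (simp add: sum.remove)
  moreover have "(\<Sum>h\<in>U-{k}. F h ((x(k:=v)) h)) = (\<Sum>h\<in>U-{k}. F h (x h))"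
    by (rule sum.cong) auto
  moreover have "(\<Sum>h\<in>U. F h (x h)) = F k (x k) + (\<Sum>h\<in>U-{k}. F h (x h))"
    using assms True by (simp add: sum.remove)
  ultimately show ?thesis using True by (simp add: ac_simps)
next
  case False
  have "(\<Sum>h\<in>U. F h ((x(k:=v)) h)) = (\<Sum>h\<in>U. F h (x h))"
    by (rule sum.cong) (use False in auto)
  then show ?thesis using False by simp
qed

lemma sum_upd_simple:
  fixes x :: "'a \<Rightarrow> 'c::comm_monoid_add"
  assumes "finite U"
  shows "sum (x(k:=v)) U + (if k \<in> U then x k else 0) = sum x U + (if k \<in> U then v else 0)"
  using sum_upd[OF assms, of "\<lambda>h z. z" x k v] by simp

lemma finite_base: "finite E \<Longrightarrow> finite (base_set E f d)"
proof -
  assume fin: "finite E"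
  have "base_set E f d \<subseteq> {x. \<forall>h. (h \<in> E \<longrightarrow> x h \<in> {..d}) \<and> (h \<notin> E \<longrightarrow> x h = 0)}"
  proof
    fix x assume x: "x \<in> base_set E f d"
    { fix h assume h: "h \<in> E"
      have "x h \<le> (\<Sum>e\<in>E. x e)" using fin h by (intro member_le_sum) auto
      then have "x h \<le> d" using x by (simp add: base_set_def) }
    then show "x \<in> {x. \<forall>h. (h \<in> E \<longrightarrow> x h \<in> {..d}) \<and> (h \<notin> E \<longrightarrow> x h = 0)}"
      using x by (auto simp: base_set_def natvecs_def)
  qed
  then show ?thesis by (rule finite_subset) (intro finite_set_of_finite_funs fin finite_atMost)
qed

lemma marg_mono_x:
  assumes "regular C" "1 \<le> a" "a \<le> b"
  shows "marg C a u \<le> marg C b u"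
  using assms(3)
proof (induction b rule: dec_induct)
  case base then show ?case by simp
next
  case (step n)
  have "marg C n u \<le> marg C (n+1) u"
    using assms(1,2) step(1) unfolding regular_def
    by (meson order_trans le_trans)
  then show ?case using step by simp
qed

lemma marg_t1: "regular C \<Longrightarrow> 1 \<le> a \<Longrightarrow> marg C a u \<le> marg C a (u+1)"
  unfolding regular_def by blast
lemma marg_t2: "regular C \<Longrightarrow> 1 \<le> a \<Longrightarrow> marg C a (u+1) \<le> marg C (a+1) u"
  unfolding regular_def by blast

lemma margA:
  assumes "regular C" "yv + 1 \<le> xv"
    and "u' = u \<or> u' + 1 = u \<or> (u' = u+1 \<and> yv + 2 \<le> xv)"
  shows "marg C (yv+1) u' \<le> marg C xv u"
  using assms(3)
proof (elim disjE)
  assume "u' = u" then show ?thesis using marg_mono_x[OF assms(1) _ assms(2)] by simp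
next
  assume h: "u' + 1 = u"
  have "marg C (yv+1) u' \<le> marg C (yv+1) (u'+1)" by (rule marg_t1[OF assms(1)]) simp
  also have "\<dots> \<le> marg C xv u" using h marg_mono_x[OF assms(1) _ assms(2)] by simp
  finally show ?thesis .
next
  assume h: "u' = u+1 \<and> yv + 2 \<le> xv"
  have "marg C (yv+1) u' \<le> marg C (yv+1+1) u" using h marg_t2[OF assms(1)] by simp
  also have "\<dots> \<le> marg C xv u" using h by (intro marg_mono_x[OF assms(1)]) auto
  finally show ?thesis .
qed

lemma margB:
  assumes "regular C" "xv + 1 \<le> yv"
    and "u' = u \<or> u' = u + 1 \<or> (u' + 1 = u \<and> xv + 2 \<le> yv)"
  shows "marg C (xv+1) u \<le> marg C yv u'"
  using assms(3)
proof (elim disjE)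
  assume "u' = u" then show ?thesis using marg_mono_x[OF assms(1) _ assms(2)] by simp
next
  assume h: "u' = u + 1"
  have "marg C (xv+1) u \<le> marg C yv u" using marg_mono_x[OF assms(1) _ assms(2)] by simp
  also have "\<dots> \<le> marg C yv u'" using h assms(2) marg_t1[OF assms(1), of yv u] by simp
  finally show ?thesis .
next
  assume h: "u' + 1 = u \<and> xv + 2 \<le> yv"
  have "marg C (xv+1) u \<le> marg C (yv - 1) (u'+1)" using h marg_mono_x[OF assms(1), of "xv+1" "yv - 1" u] by fastforce
  also have "\<dots> \<le> marg C (yv - 1 + 1) u'" using h by (intro marg_t2[OF assms(1)]) auto
  finally show ?thesis using h by simp
qed

lemma tight_ui:
  assumes fin: "finite E" and pm: "polymatroid_rank E f"
    and le: "\<And>W. W \<subseteq> E \<Longrightarrow> sum x W \<le> f W"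
    and U: "U \<subseteq> E" "sum x U = f U" and V: "V \<subseteq> E" "sum x V = f V"
  shows "sum x (U \<union> V) = f (U \<union> V) \<and> sum x (U \<inter> V) = f (U \<inter> V)"
proof -
  have fU: "finite U" "finite V" using U V fin finite_subset by auto
  have "sum x (U \<union> V) + sum x (U \<inter> V) = sum x U + sum x V"
    using sum.union_inter[OF fU] .
  moreover have "f (U \<union> V) + f (U \<inter> V) \<le> f U + f V"
    using pm U V unfolding polymatroid_rank_def by blast
  moreover have "sum x (U \<union> V) \<le> f (U \<union> V)" "sum x (U \<inter> V) \<le> f (U \<inter> V)"
    using le[of "U \<union> V"] le[of "U \<inter> V"] U V by auto
  ultimately show ?thesis using U V by linarith
qed

lemma exchange:
  assumes fin: "finite E" and pm: "polymatroid_rank E f"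
    and x: "x \<in> base_set E f d" and y: "y \<in> base_set E f d"
    and e: "e \<in> E" and exy: "y e < x e"
  shows "\<exists>g\<in>E. x g < y g \<and> x(e := x e - 1, g := x g + 1) \<in> base_set E f d
           \<and> y(e := y e + 1, g := y g - 1) \<in> base_set E f d"
proof (rule ccontr)
  assume nex: "\<not> ?thesis"
  have xle: "\<And>W. W \<subseteq> E \<Longrightarrow> sum x W \<le> f W" and xE: "sum x E = d"
    and xn: "x \<in> natvecs E"
    using x by (auto simp: base_set_def)
  have yle: "\<And>W. W \<subseteq> E \<Longrightarrow> sum y W \<le> f W" and yE: "sum y E = d"
    and yn: "y \<in> natvecs E"
    using y by (auto simp: base_set_def)
  have dich: "(\<exists>U. U \<subseteq> E \<and> sum x U = f U \<and> g \<in> U \<and> e \<notin> U) \<or>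
              (\<exists>V. V \<subseteq> E \<and> sum y V = f V \<and> e \<in> V \<and> g \<notin> V)"
    if g: "g \<in> E" "x g < y g" for g
  proof -
    have ge: "g \<noteq> e" using g exy by auto
    have sx: "sum (x(e := x e - 1, g := x g + 1)) U + (if e \<in> U then 1 else 0)
            = sum x U + (if g \<in> U then 1 else 0)" if "U \<subseteq> E" for U
    proof -
      have fU: "finite U" using that fin finite_subset by auto
      have 1: "sum (x(e := x e - 1)) U + (if e \<in> U then x e else 0) = sum x U + (if e \<in> U then x e - 1 else 0)"
        by (rule sum_upd_simple[OF fU])
      have 2: "sum (x(e := x e - 1, g := x g + 1)) U + (if g \<in> U then (x(e := x e - 1)) g else 0)
             = sum (x(e := x e - 1)) U + (if g \<in> U then x g + 1 else 0)"
        by (rule sum_upd_simple[OF fU])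
      show ?thesis using 1 2 ge exy by (auto split: if_splits)
    qed
    have sy: "sum (y(e := y e + 1, g := y g - 1)) U + (if g \<in> U then 1 else 0)
            = sum y U + (if e \<in> U then 1 else 0)" if "U \<subseteq> E" for U
    proof -
      have fU: "finite U" using that fin finite_subset by auto
      have 1: "sum (y(e := y e + 1)) U + (if e \<in> U then y e else 0) = sum y U + (if e \<in> U then y e + 1 else 0)"
        by (rule sum_upd_simple[OF fU])
      have 2: "sum (y(e := y e + 1, g := y g - 1)) U + (if g \<in> U then (y(e := y e + 1)) g else 0)
             = sum (y(e := y e + 1)) U + (if g \<in> U then y g - 1 else 0)"
        by (rule sum_upd_simple[OF fU])
      show ?thesis using 1 2 ge g by (auto split: if_splits)
    qed
    from nex g have "x(e := x e - 1, g := x g + 1) \<notin> base_set E f d \<or>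
        y(e := y e + 1, g := y g - 1) \<notin> base_set E f d" by blast
    then show ?thesis
    proof
      assume nb: "x(e := x e - 1, g := x g + 1) \<notin> base_set E f d"
      have "x(e := x e - 1, g := x g + 1) \<in> natvecs E" using xn e g by (auto simp: natvecs_def)
      moreover have "sum (x(e := x e - 1, g := x g + 1)) E = d" using sx[of E] e g xE by simp
      ultimately obtain U where U: "U \<subseteq> E" "\<not> sum (x(e := x e - 1, g := x g + 1)) U \<le> f U"
        using nb unfolding base_set_def by blast
      have "sum x U \<le> f U" using xle U by auto
      then have "g \<in> U \<and> e \<notin> U \<and> sum x U = f U" using sx[OF U(1)] U(2) by (auto split: if_splits)
      then show ?thesis using U by blast
    next
      assume nb: "y(e := y e + 1, g := y g - 1) \<notin> base_set E f d"
      have "y(e := y e + 1, g := y g - 1) \<in> natvecs E" using yn e g by (auto simp: natvecs_def)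
      moreover have "sum (y(e := y e + 1, g := y g - 1)) E = d" using sy[of E] e g yE by simp
      ultimately obtain U where U: "U \<subseteq> E" "\<not> sum (y(e := y e + 1, g := y g - 1)) U \<le> f U"
        using nb unfolding base_set_def by blast
      have "sum y U \<le> f U" using yle U by auto
      then have "e \<in> U \<and> g \<notin> U \<and> sum y U = f U" using sy[OF U(1)] U(2) by (auto split: if_splits)
      then show ?thesis using U by blast
    qed
  qed
  define FX where "FX = {U. U \<subseteq> E \<and> sum x U = f U \<and> e \<notin> U}"
  define FY where "FY = {V. V \<subseteq> E \<and> sum y V = f V \<and> e \<in> V}"
  define T where "T = \<Union>FX"
  define S where "S = E \<inter> \<Inter>FY"
  have fFX: "finite FX" unfolding FX_def by (rule finite_subset[of _ "Pow E"]) (use fin in auto)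
  have fFY: "finite FY" unfolding FY_def by (rule finite_subset[of _ "Pow E"]) (use fin in auto)
  have f0: "f {} = 0" using pm by (simp add: polymatroid_rank_def)
  have Tprop: "\<Union>F \<subseteq> E \<and> sum x (\<Union>F) = f (\<Union>F) \<and> e \<notin> \<Union>F" if "finite F" "F \<subseteq> FX" for F
    using that
  proof (induction F rule: finite_induct)
    case empty then show ?case using f0 by simp
  next
    case (insert U F)
    then have U: "U \<subseteq> E" "sum x U = f U" "e \<notin> U" by (auto simp: FX_def)
    have "sum x (U \<union> \<Union>F) = f (U \<union> \<Union>F)"
      using tight_ui[OF fin pm xle U(1,2)] insert by auto
    then show ?case using insert U by auto
  qed
  have Sprop: "e \<in> E \<inter> \<Inter>F \<and> (sum y (E \<inter> \<Inter>F) = f (E \<inter> \<Inter>F) \<or> E \<inter> \<Inter>F = E)"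
    if "finite F" "F \<subseteq> FY" for F
    using that
  proof (induction F rule: finite_induct)
    case empty then show ?case using e by simp
  next
    case (insert V F)
    then have V: "V \<subseteq> E" "sum y V = f V" "e \<in> V" by (auto simp: FY_def)
    have eq: "E \<inter> \<Inter>(insert V F) = V \<inter> (E \<inter> \<Inter>F)" by auto
    from insert have IH: "e \<in> E \<inter> \<Inter>F" "sum y (E \<inter> \<Inter>F) = f (E \<inter> \<Inter>F) \<or> E \<inter> \<Inter>F = E" by auto
    from IH(2) have "sum y (V \<inter> (E \<inter> \<Inter>F)) = f (V \<inter> (E \<inter> \<Inter>F))"
    proof
      assume "sum y (E \<inter> \<Inter>F) = f (E \<inter> \<Inter>F)"
      then show ?thesis using tight_ui[OF fin pm yle V(1,2), of "E \<inter> \<Inter>F"] by auto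
    next
      assume "E \<inter> \<Inter>F = E"
      then show ?thesis using V by (simp add: Int_absorb2)
    qed
    then show ?case using eq IH V by auto
  qed
  have T: "T \<subseteq> E" "sum x T = f T" "e \<notin> T" using Tprop[OF fFX] by (auto simp: T_def)
  have S: "e \<in> S" "sum y S = f S \<or> S = E" using Sprop[OF fFY] by (auto simp: S_def)
  have SE: "S \<subseteq> E" by (auto simp: S_def)
  have fS: "finite (S - T)" using SE fin finite_subset by blast
  have mono: "y h \<le> x h" if h: "h \<in> S - T" for h
  proof (rule ccontr)
    assume "\<not> y h \<le> x h"
    then have "x h < y h" by simp
    have hE: "h \<in> E" using h SE by auto
    from dich[OF hE \<open>x h < y h\<close>] show False
    proof (elim disjE exE)
      fix U assume "U \<subseteq> E \<and> sum x U = f U \<and> h \<in> U \<and> e \<notin> U"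
      then have "U \<in> FX" "h \<in> U" by (auto simp: FX_def)
      then show False using h by (auto simp: T_def)
    next
      fix V assume "V \<subseteq> E \<and> sum y V = f V \<and> e \<in> V \<and> h \<notin> V"
      then have "V \<in> FY" "h \<notin> V" by (auto simp: FY_def)
      then show False using h by (auto simp: S_def)
    qed
  qed
  have lt: "sum y (S - T) < sum x (S - T)"
    using fS mono exy S(1) T(3) by (intro sum_strict_mono_ex1) auto
  have fST: "finite (S \<union> T)" "finite S" using SE T(1) fin finite_subset by auto
  have split1: "sum x (S \<union> T) = sum x (S - T) + sum x T"
    using sum.subset_diff[OF _ fST(1), of T x] by (simp add: Un_Diff)
  have split2: "sum y S = sum y (S - T) + sum y (S \<inter> T)"
    using sum.subset_diff[OF _ fST(2), of "S \<inter> T" y] by (simp add: Diff_Int)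
  have "sum x (S - T) \<le> sum y (S - T)"
    using S(2)
  proof
    assume Sy: "sum y S = f S"
    have "sum x (S \<union> T) \<le> f (S \<union> T)" using xle SE T(1) by auto
    moreover have "f (S \<union> T) + f (S \<inter> T) \<le> f S + f T"
      using pm SE T(1) unfolding polymatroid_rank_def by blast
    moreover have "sum y (S \<inter> T) \<le> f (S \<inter> T)" using yle[of "S \<inter> T"] SE by auto
    ultimately show ?thesis using split1 split2 Sy T(2) by linarith
  next
    assume SeqE: "S = E"
    have "sum x S = sum x (S - T) + sum x T" "sum y S = sum y (S - T) + sum y T"
      using sum.subset_diff[OF _ fST(2), of T x] sum.subset_diff[OF _ fST(2), of T y] SeqE T(1) by auto
    moreover have "sum y T \<le> f T" using yle T(1) by auto
    moreover have "sum x S = d" "sum y S = d" using SeqE xE yE by auto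
    ultimately show ?thesis using T(2) by linarith
  qed
  with lt show False by simp
qed

lemma cost2:
  assumes fin: "finite E" and "e \<in> E" "g \<in> E" "e \<noteq> g"
  shows "total_cost E C t (x(e:=a, g:=b)) = total_cost E C t x + (C e a (t e) - C e (x e) (t e))
           + (C g b (t g) - C g (x g) (t g))"
proof -
  have 1: "(\<Sum>h\<in>E. C h ((x(e:=a)) h) (t h)) + (if e \<in> E then C e (x e) (t e) else 0)
       = (\<Sum>h\<in>E. C h (x h) (t h)) + (if e \<in> E then C e a (t e) else 0)"
    by (rule sum_upd[OF fin, of "\<lambda>h z. C h z (t h)"])
  have 2: "(\<Sum>h\<in>E. C h ((x(e:=a, g:=b)) h) (t h)) + (if g \<in> E then C g ((x(e:=a)) g) (t g) else 0)
       = (\<Sum>h\<in>E. C h ((x(e:=a)) h) (t h)) + (if g \<in> E then C g b (t g) else 0)"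
    by (rule sum_upd[OF fin, of "\<lambda>h z. C h z (t h)"])
  show ?thesis using 1 2 assms unfolding total_cost_def by simp
qed

lemma l1_2:
  assumes fin: "finite E" and "e \<in> E" "g \<in> E" "e \<noteq> g" "y e < x e" "x g < y g"
  shows "l1dist E x (y(e := y e + 1, g := y g - 1)) + 2 = l1dist E x y"
proof -
  let ?F = "\<lambda>h z. nat \<bar>int (x h) - int z\<bar>"
  have 1: "(\<Sum>h\<in>E. ?F h ((y(e:=y e + 1)) h)) + (if e \<in> E then ?F e (y e) else 0)
       = (\<Sum>h\<in>E. ?F h (y h)) + (if e \<in> E then ?F e (y e + 1) else 0)"
    by (rule sum_upd[OF fin, of ?F])
  have 2: "(\<Sum>h\<in>E. ?F h ((y(e:=y e + 1, g:=y g - 1)) h)) + (if g \<in> E then ?F g ((y(e:=y e + 1)) g) else 0)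
       = (\<Sum>h\<in>E. ?F h ((y(e:=y e + 1)) h)) + (if g \<in> E then ?F g (y g - 1) else 0)"
    by (rule sum_upd[OF fin, of ?F])
  have 3: "?F e (y e) = ?F e (y e + 1) + 1" "?F g (y g) = ?F g (y g - 1) + 1"
    using assms by auto
  show ?thesis using 1 2 3 assms unfolding l1dist_def by simp
qed

lemma improve:
  assumes fin: "finite E" and eg: "e \<in> E" "g \<in> E"
    and ox: "optimal_sol E f C t d x" and oy: "optimal_sol E f C t' d y"
    and lt: "y e < x e" "x g < y g"
    and xB: "x(e := x e - 1, g := x g + 1) \<in> base_set E f d"
    and yB: "y(e := y e + 1, g := y g - 1) \<in> base_set E f d"
    and mA: "marg (C e) (y e + 1) (t' e) \<le> marg (C e) (x e) (t e)"
    and mB: "marg (C g) (x g + 1) (t g) \<le> marg (C g) (y g) (t' g)"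
  shows "optimal_sol E f C t' d (y(e := y e + 1, g := y g - 1)) \<and>
         l1dist E x (y(e := y e + 1, g := y g - 1)) < l1dist E x y"
proof -
  have ne: "e \<noteq> g" using lt by auto
  have c1: "total_cost E C t (x(e := x e - 1, g := x g + 1)) = total_cost E C t x
     - marg (C e) (x e) (t e) + marg (C g) (x g + 1) (t g)"
    using cost2[OF fin eg ne, of C t x "x e - 1" "x g + 1"] by (simp add: marg_def)
  have c2: "total_cost E C t' (y(e := y e + 1, g := y g - 1)) = total_cost E C t' y
     + marg (C e) (y e + 1) (t' e) - marg (C g) (y g) (t' g)"
    using cost2[OF fin eg ne, of C t' y "y e + 1" "y g - 1"] by (simp add: marg_def)
  have "total_cost E C t x \<le> total_cost E C t (x(e := x e - 1, g := x g + 1))"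
    using ox xB by (simp add: optimal_sol_def)
  then have "total_cost E C t' (y(e := y e + 1, g := y g - 1)) \<le> total_cost E C t' y"
    using c1 c2 mA mB by linarith
  then have "optimal_sol E f C t' d (y(e := y e + 1, g := y g - 1))"
    using oy yB unfolding optimal_sol_def by (meson order_trans)
  moreover have "l1dist E x (y(e := y e + 1, g := y g - 1)) < l1dist E x y"
    using l1_2[OF fin eg ne lt] by simp
  ultimately show ?thesis by blast
qed

theorem corollary3p3:
  fixes E :: "'a set" and f :: "'a set \<Rightarrow> nat" and d :: nat
    and C :: "'a \<Rightarrow> nat \<Rightarrow> nat \<Rightarrow> real"
  assumes "finite E" and "E \<noteq> {}"
    and "polymatroid_rank E f"
    and "\<And>e x t. e \<in> E \<Longrightarrow> C e x t \<ge> 0"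
    and "\<And>e. e \<in> E \<Longrightarrow> regular (C e)"
  shows "\<forall>t \<in> natvecs E. \<forall>x. optimal_sol E f C t d x \<longrightarrow>
           (\<forall>t' \<in> natvecs E. l1dist E t t' = 1 \<longrightarrow>
              (\<exists>x'. optimal_sol E f C t' d x' \<and> l1dist E x x' \<le> 2))"
proof (intro ballI allI impI)
  note fin = assms(1) and pm = assms(3) and reg = assms(5)
  fix t x t'
  assume ox: "optimal_sol E f C t d x" and d1: "l1dist E t t' = 1"
  define F where "F h = nat \<bar>int (t h) - int (t' h)\<bar>" for h
  have sF: "sum F E = 1" using d1 by (simp add: l1dist_def F_def)
  have "\<exists>a\<in>E. F a \<noteq> 0"
  proof (rule ccontr)
    assume "\<not> (\<exists>a\<in>E. F a \<noteq> 0)"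
    then have "sum F E = 0" by simp
    then show False using sF by simp
  qed
  then obtain a where aE: "a \<in> E" and Fa: "F a \<noteq> 0" by blast
  have "sum F E = F a + sum F (E - {a})" using fin aE by (simp add: sum.remove)
  then have Fa1: "F a = 1" and s0: "sum F (E - {a}) = 0" using sF Fa by auto
  have oth: "\<forall>h\<in>E. h \<noteq> a \<longrightarrow> t' h = t h"
  proof (intro ballI impI)
    fix h assume "h \<in> E" "h \<noteq> a"
    then have "F h = 0" using s0 fin by (simp add: sum_eq_0_iff)
    then show "t' h = t h" by (simp add: F_def)
  qed
  have ch: "t' a = t a + 1 \<or> t a = t' a + 1" using Fa1 by (simp add: F_def) arith
  define B where "B = base_set E f d"
  have xB: "x \<in> B" using ox by (simp add: optimal_sol_def B_def)
  have fB: "finite B" using finite_base[OF fin] by (simp add: B_def)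
  obtain z where "is_arg_min (total_cost E C t') (\<lambda>x. x \<in> B) z"
    using ex_is_arg_min_if_finite[OF fB, of "total_cost E C t'"] xB by blast
  then have oz: "optimal_sol E f C t' d z"
    unfolding is_arg_min_def optimal_sol_def B_def by (meson not_le)
  obtain y where oy: "optimal_sol E f C t' d y"
    and ymin: "\<And>w. optimal_sol E f C t' d w \<Longrightarrow> l1dist E x y \<le> l1dist E x w"
    using ex_has_least_nat[of "optimal_sol E f C t' d" z "l1dist E x", OF oz] by blast
  have yB: "y \<in> B" using oy by (simp add: optimal_sol_def B_def)
  have nofix: False if eg: "e \<in> E" "g \<in> E" and lt: "y e < x e" "x g < y g"
    and xB': "x(e := x e - 1, g := x g + 1) \<in> B"
    and yB': "y(e := y e + 1, g := y g - 1) \<in> B"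
    and mA: "marg (C e) (y e + 1) (t' e) \<le> marg (C e) (x e) (t e)"
    and mB: "marg (C g) (x g + 1) (t g) \<le> marg (C g) (y g) (t' g)" for e g
  proof -
    from improve[OF fin eg ox oy lt xB'[unfolded B_def] yB'[unfolded B_def] mA mB]
    show False using ymin[of "y(e := y e + 1, g := y g - 1)"] by simp
  qed
  have "l1dist E x y \<le> 2"
  proof (rule ccontr)
    assume big: "\<not> l1dist E x y \<le> 2"
    define pos where "pos = (\<Sum>h\<in>E. x h - y h)"
    define neg where "neg = (\<Sum>h\<in>E. y h - x h)"
    have "l1dist E x y = (\<Sum>h\<in>E. (x h - y h) + (y h - x h))"
      unfolding l1dist_def by (rule sum.cong) auto
    then have l1: "l1dist E x y = pos + neg" by (simp add: sum.distrib pos_def neg_def)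
    have "(\<Sum>h\<in>E. x h + (y h - x h)) = (\<Sum>h\<in>E. y h + (x h - y h))"
      by (rule sum.cong) auto
    moreover have "sum x E = d" "sum y E = d" using xB yB by (auto simp: B_def base_set_def)
    ultimately have "pos = neg" by (simp add: sum.distrib pos_def neg_def)
    with l1 big have pos2: "pos \<ge> 2" "neg \<ge> 2" by auto
    have one: "(\<Sum>h\<in>E. (if h = a then 1 else 0::nat)) = 1" using fin aE by simp
    from ch show False
    proof
      assume up: "t' a = t a + 1"
      obtain e where e: "e \<in> E" "y e < x e" "\<not> (e = a \<and> x e = y e + 1)"
      proof (rule ccontr)
        assume "\<not> thesis"
        have "\<forall>h\<in>E. x h - y h \<le> (if h = a then 1 else 0)"
        proof
          fix h assume hE: "h \<in> E"
          show "x h - y h \<le> (if h = a then 1 else 0)"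
          proof (cases "y h < x h")
            case True
            then have "h = a \<and> x h = y h + 1" using that[OF hE True] \<open>\<not> thesis\<close> by blast
            then show ?thesis by auto
          qed simp
        qed
        then have "pos \<le> 1" unfolding pos_def using sum_mono[of E "\<lambda>h. x h - y h" "\<lambda>h. if h = a then 1 else 0::nat"] one by simp
        then show False using pos2 by simp
      qed
      obtain g where g: "g \<in> E" "x g < y g" and xg: "x(e := x e - 1, g := x g + 1) \<in> B"
        and yg: "y(e := y e + 1, g := y g - 1) \<in> B"
        using exchange[OF fin pm xB[unfolded B_def] yB[unfolded B_def] e(1,2)] B_def by blast
      have mA: "marg (C e) (y e + 1) (t' e) \<le> marg (C e) (x e) (t e)"
        using e oth up by (intro margA reg) auto
      have mB: "marg (C g) (x g + 1) (t g) \<le> marg (C g) (y g) (t' g)"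
        using g oth up by (intro margB reg) auto
      show False using nofix[OF e(1) g(1) e(2) g(2) xg yg mA mB] .
    next
      assume dn: "t a = t' a + 1"
      obtain g where g: "g \<in> E" "x g < y g" "\<not> (g = a \<and> y g = x g + 1)"
      proof (rule ccontr)
        assume "\<not> thesis"
        have "\<forall>h\<in>E. y h - x h \<le> (if h = a then 1 else 0)"
        proof
          fix h assume hE: "h \<in> E"
          show "y h - x h \<le> (if h = a then 1 else 0)"
          proof (cases "x h < y h")
            case True
            then have "h = a \<and> y h = x h + 1" using that[OF hE True] \<open>\<not> thesis\<close> by blast
            then show ?thesis by auto
          qed simp
        qed
        then have "neg \<le> 1" unfolding neg_def using sum_mono[of E "\<lambda>h. y h - x h" "\<lambda>h. if h = a then 1 else 0::nat"] one by simp
        then show False using pos2 by simp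
      qed
      obtain e where e: "e \<in> E" "y e < x e" and yg: "y(g := y g - 1, e := y e + 1) \<in> B"
        and xg: "x(g := x g + 1, e := x e - 1) \<in> B"
        using exchange[OF fin pm yB[unfolded B_def] xB[unfolded B_def] g(1,2)] B_def by blast
      have ne: "e \<noteq> g" using e g by auto
      have xg': "x(e := x e - 1, g := x g + 1) \<in> B" using xg ne by (simp add: fun_upd_twist)
      have yg': "y(e := y e + 1, g := y g - 1) \<in> B" using yg ne by (simp add: fun_upd_twist)
      have mA: "marg (C e) (y e + 1) (t' e) \<le> marg (C e) (x e) (t e)"
        using e oth dn by (intro margA reg) auto
      have mB: "marg (C g) (x g + 1) (t g) \<le> marg (C g) (y g) (t' g)"
        using g oth dn by (intro margB reg) auto
      show False using nofix[OF e(1) g(1) e(2) g(2) xg' yg' mA mB] .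
    qed
  qed
  then show "\<exists>x'. optimal_sol E f C t' d x' \<and> l1dist E x x' \<le> 2" using oy by blast
qed

end
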